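(* Let $\Delta$ be a finite, flag, simply connected simplicial complex and $\mathcal{P}_H$ as in the context. If $(C_i)_{i=0}^m$ is a combinatorial null-homotopy for the combinatorial 1-cycle $e_1\cdot\ldots\cdot e_l$, then for every $n\in\mathbb{Z}$ the word $e_1^n\cdots e_l^n$ has $\mathrm{Area}_{\mathcal{P}_H}(e_1^n\cdots e_l^n)\le 3m|n|^2$.
   Context: $\mathrm{Edge}(\Delta)$ is the set of directed edges of $\Delta$; for $e$ in it, $\iota e$, $\tau e$ are its initial and terminal vertices and $\overline{e}$ is the reversed edge. $e_1\cdot\ldots\cdot e_l$ is a combinatorial path if $\tau e_i=\iota e_{i+1}$, and a combinatorial 1-cycle if also $\tau e_l=\iota e_1$ (the empty cycle $\emptyset$ allowed). $\mathcal{P}_H=\langle\mathrm{Edge}(\Delta)\mid\mathcal{R}_H\rangle$ where $\mathcal{R}_H$ consists of the words $e\overline{e}$ ($e\in\mathrm{Edge}(\Delta)$) and $efg$, $e^{-1}f^{-1}g^{-1}$ for every combinatorial 1-cycle $e\cdot f\cdot g$. $\mathrm{Area}_{\mathcal{P}_H}(w)$ is the least $m$ such that $w$ is freely equal to $\prod_{i=1}^m x_ir_ix_i^{-1}$ with $r_i\in\mathcal{R}_H^{\pm1}$. For a letter $e$ and $k\in\mathbb{Z}$, $e^k$ is the word of $k$ copies of $e$ if $k\ge0$ and $|k|$ copies of $e^{-1}$ if $k<0$. A combinatorial null-homotopy for a 1-cycle $C$ is a sequence $(C_i)_{i=0}^m$ of combinatorial 1-cycles with $C_0=C$, $C_m=\emptyset$,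 and each $C_{i+1}$ obtained from $C_i=e_1\cdot\ldots\cdot e_l$ by one of: inserting $e\cdot\overline{e}$ (some $e\in\mathrm{Edge}(\Delta)$) between $e_k$ and $e_{k+1}$ for some $k$ (1-cell expansion) or the reverse deletion (1-cell collapse); inserting $e\cdot f\cdot g$, where $e\cdot f\cdot g$ is a combinatorial 1-cycle, between $e_k$ and $e_{k+1}$ (2-cell expansion) or the reverse deletion (2-cell collapse). *)

theory Defs
  imports "HOL-Analysis.Analysis"
begin

definition abs_simplicial_complex :: "'v set set \<Rightarrow> bool" where
  "abs_simplicial_complex K \<longleftrightarrow>
     (\<forall>\<sigma>\<in>K. \<sigma> \<noteq> {} \<and> finite \<sigma>) \<and>
     (\<forall>\<sigma>\<in>K. \<forall>\<tau>. \<tau> \<subseteq> \<sigma> \<and> \<tau> \<noteq> {} \<longrightarrow> \<tau> \<in> K)"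

definition cx_vertices :: "'v set set \<Rightarrow> 'v set" where
  "cx_vertices K = \<Union>K"

definition finite_complex :: "'v set set \<Rightarrow> bool" where
  "finite_complex K \<longleftrightarrow> finite K"

definition flag_complex :: "'v set set \<Rightarrow> bool" where
  "flag_complex K \<longleftrightarrow>
     (\<forall>S. S \<noteq> {} \<and> finite S \<and> S \<subseteq> cx_vertices K \<and>
          (\<forall>u\<in>S. \<forall>v\<in>S. u \<noteq> v \<longrightarrow> {u, v} \<in> K) \<longrightarrow> S \<in> K)"

definition geom_realisation :: "('v::finite) set set \<Rightarrow> (real^'v) set" where
  "geom_realisation K = (\<Union>\<sigma>\<in>K. convex hull ((\<lambda>v. axis v 1) ` \<sigma>))"

definition simply_connected_complex :: "('v::finite) set set \<Rightarrow> bool" where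
  "simply_connected_complex K \<longleftrightarrow> simply_connected (geom_realisation K)"

definition Edge :: "'v set set \<Rightarrow> ('v \<times> 'v) set" where
  "Edge K = {(u, v). u \<noteq> v \<and> {u, v} \<in> K}"

definition rev_edge :: "'v \<times> 'v \<Rightarrow> 'v \<times> 'v" where
  "rev_edge e = (snd e, fst e)"

definition comb_path :: "'v set set \<Rightarrow> ('v \<times> 'v) list \<Rightarrow> bool" where
  "comb_path K es \<longleftrightarrow> set es \<subseteq> Edge K \<and>
     (\<forall>i. Suc i < length es \<longrightarrow> snd (es ! i) = fst (es ! Suc i))"

definition comb_cycle :: "'v set set \<Rightarrow> ('v \<times> 'v) list \<Rightarrow> bool" where
  "comb_cycle K es \<longleftrightarrow> comb_path K es \<and> (es \<noteq> [] \<longrightarrow> snd (last es) = fst (hd es))"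

definition cell_expansion :: "'v set set \<Rightarrow> ('v \<times> 'v) list \<Rightarrow> ('v \<times> 'v) list \<Rightarrow> bool" where
  "cell_expansion K C C' \<longleftrightarrow>
     (\<exists>xs ys w. C = xs @ ys \<and> C' = xs @ w @ ys \<and>
        ((\<exists>e\<in>Edge K. w = [e, rev_edge e]) \<or>
         (\<exists>e f g. w = [e, f, g] \<and> comb_cycle K [e, f, g])))"

definition null_homotopy ::
  "'v set set \<Rightarrow> ('v \<times> 'v) list \<Rightarrow> (nat \<Rightarrow> ('v \<times> 'v) list) \<Rightarrow> nat \<Rightarrow> bool" where
  "null_homotopy K C Cs m \<longleftrightarrow>
     Cs 0 = C \<and> Cs m = [] \<and> (\<forall>i\<le>m. comb_cycle K (Cs i)) \<and>
     (\<forall>i<m. cell_expansion K (Cs i) (Cs (Suc i)) \<or> cell_expansion K (Cs (Suc i)) (Cs i))"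

text \<open>Words in the free group on Edge(K): lists of letters (b, e), where (True, e) is e and
(False, e) is e^-1.\<close>
type_synonym 'v letter = "bool \<times> ('v \<times> 'v)"

definition inv_word :: "'v letter list \<Rightarrow> 'v letter list" where
  "inv_word w = rev (map (\<lambda>(b, e). (\<not> b, e)) w)"

definition free_red_step :: "'v letter list \<Rightarrow> 'v letter list \<Rightarrow> bool" where
  "free_red_step u v \<longleftrightarrow> (\<exists>xs ys b e. u = xs @ [(b, e), (\<not> b, e)] @ ys \<and> v = xs @ ys)"

definition freely_equal :: "'v letter list \<Rightarrow> 'v letter list \<Rightarrow> bool" where
  "freely_equal u v \<longleftrightarrow> (sup free_red_step (conversep free_red_step))\<^sup>*\<^sup>* u v"

definition relators_H :: "'v set set \<Rightarrow> 'v letter list set" where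
  "relators_H K =
     {[(True, e), (True, rev_edge e)] | e. e \<in> Edge K} \<union>
     {[(True, e), (True, f), (True, g)] | e f g. comb_cycle K [e, f, g]} \<union>
     {[(False, e), (False, f), (False, g)] | e f g. comb_cycle K [e, f, g]}"

definition relators_H_pm :: "'v set set \<Rightarrow> 'v letter list set" where
  "relators_H_pm K = relators_H K \<union> inv_word ` relators_H K"

definition area_H :: "'v set set \<Rightarrow> 'v letter list \<Rightarrow> nat" where
  "area_H K w = (LEAST m. \<exists>xs rs. length xs = m \<and> length rs = m \<and>
      (\<forall>x\<in>set xs. snd ` set x \<subseteq> Edge K) \<and> set rs \<subseteq> relators_H_pm K \<and>
      freely_equal w (concat (map (\<lambda>(x, r). x @ r @ inv_word x) (zip xs rs))))"

definition letter_pow :: "'v \<times> 'v \<Rightarrow> int \<Rightarrow> 'v letter list" where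
  "letter_pow e k = (if k \<ge> 0 then replicate (nat k) (True, e) else replicate (nat (- k)) (False, e))"

definition pow_word :: "('v \<times> 'v) list \<Rightarrow> int \<Rightarrow> 'v letter list" where
  "pow_word es n = concat (map (\<lambda>e. letter_pow e n) es)"

end

theory Submission
  imports Defs
begin

definition negl :: "'v letter \<Rightarrow> 'v letter" where "negl x = (\<not> fst x, snd x)"

lemma inv_word_negl: "inv_word w = rev (map negl w)"
  unfolding inv_word_def negl_def by (simp add: case_prod_beta')

lemma inv_word_simps[simp]: "inv_word [] = []" "inv_word (x # w) = inv_word w @ [negl x]"
  "inv_word (u @ v) = inv_word v @ inv_word u" "inv_word (inv_word w) = w"
  by (simp_all add: inv_word_negl negl_def comp_def rev_map)

lemma negl_negl[simp]: "negl (negl x) = x" by (simp add: negl_def)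

lemma fe_refl: "freely_equal u u" unfolding freely_equal_def by simp

lemma fe_trans: "freely_equal u v \<Longrightarrow> freely_equal v w \<Longrightarrow> freely_equal u w"
  unfolding freely_equal_def by (rule rtranclp_trans)

lemma fe_sym: "freely_equal u v \<Longrightarrow> freely_equal v u"
  unfolding freely_equal_def
proof (induction rule: rtranclp.induct)
  case (rtrancl_refl a) then show ?case by simp
next
  case (rtrancl_into_rtrancl a b c)
  have "(sup free_red_step free_red_step\<inverse>\<inverse>) c b" using rtrancl_into_rtrancl.hyps(2) by auto
  then show ?case using rtrancl_into_rtrancl.IH by (rule converse_rtranclp_into_rtranclp)
qed

lemma frs_cong: "free_red_step u v \<Longrightarrow> free_red_step (p @ u @ q) (p @ v @ q)"
  unfolding free_red_step_def
  by (elim exE conjE) (rule exI[of _ "p @ _"], rule exI[of _ "_ @ q"], auto)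

lemma fe_cong: "freely_equal u v \<Longrightarrow> freely_equal (p @ u @ q) (p @ v @ q)"
  unfolding freely_equal_def
proof (induction rule: rtranclp.induct)
  case (rtrancl_refl a) then show ?case by simp
next
  case (rtrancl_into_rtrancl a b c)
  from rtrancl_into_rtrancl.hyps(2) have "(sup free_red_step free_red_step\<inverse>\<inverse>) (p @ b @ q) (p @ c @ q)"
    using frs_cong by auto
  with rtrancl_into_rtrancl.IH show ?case by (rule rtranclp.rtrancl_into_rtrancl)
qed

lemma fe_append: "freely_equal a a' \<Longrightarrow> freely_equal b b' \<Longrightarrow> freely_equal (a @ b) (a' @ b')"
proof -
  assume A: "freely_equal a a'" and B: "freely_equal b b'"
  have 1: "freely_equal (a @ b) (a' @ b)" using fe_cong[OF A, of "[]" b] by simp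
  have 2: "freely_equal (a' @ b) (a' @ b')" using fe_cong[OF B, of a' "[]"] by simp
  show ?thesis by (rule fe_trans[OF 1 2])
qed

lemma fe_cancel: "freely_equal (p @ [x, negl x] @ q) (p @ q)"
proof -
  have "free_red_step (p @ [x, negl x] @ q) (p @ q)"
    unfolding free_red_step_def negl_def by (rule exI[of _ p], rule exI[of _ q], cases x, auto)
  then show ?thesis unfolding freely_equal_def by auto
qed

lemma fe_inv_cancel: "freely_equal (u @ inv_word u) []"
proof (induction u)
  case Nil then show ?case by (simp add: fe_refl)
next
  case (Cons x u)
  have "freely_equal ([x] @ (u @ inv_word u) @ [negl x]) ([x] @ [] @ [negl x])"
    using fe_cong[OF Cons] .
  moreover have "freely_equal ([] @ [x, negl x] @ []) ([] @ [])" by (rule fe_cancel)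
  ultimately have A: "freely_equal ((x # u) @ inv_word (x # u)) [x, negl x]"
     and B: "freely_equal [x, negl x] []" by simp_all
  show ?case by (rule fe_trans[OF A B])
qed

lemma fe_inv_cancel': "freely_equal (inv_word u @ u) []"
  using fe_inv_cancel[of "inv_word u"] by simp

lemma fe_mid1: "freely_equal (p @ u @ inv_word u @ q) (p @ q)"
  using fe_cong[OF fe_inv_cancel[of u], of p q] by simp
lemma fe_mid2: "freely_equal (p @ inv_word u @ u @ q) (p @ q)"
  using fe_cong[OF fe_inv_cancel'[of u], of p q] by simp

lemma frs_inv: "free_red_step u v \<Longrightarrow> free_red_step (inv_word u) (inv_word v)"
  unfolding free_red_step_def
  apply (elim exE conjE)
  subgoal for xs ys b e
    by (rule exI[of _ "inv_word ys"], rule exI[of _ "inv_word xs"], rule exI[of _ b], rule exI[of _ e])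
       (simp add: negl_def)
  done

lemma fe_inv: "freely_equal u v \<Longrightarrow> freely_equal (inv_word u) (inv_word v)"
  unfolding freely_equal_def
proof (induction rule: rtranclp.induct)
  case (rtrancl_refl a) then show ?case by simp
next
  case (rtrancl_into_rtrancl a b c)
  from rtrancl_into_rtrancl.hyps(2) have "(sup free_red_step free_red_step\<inverse>\<inverse>) (inv_word b) (inv_word c)"
    using frs_inv by auto
  with rtrancl_into_rtrancl.IH show ?case by (rule rtranclp.rtrancl_into_rtrancl)
qed

definition prd :: "'v letter list list \<Rightarrow> 'v letter list list \<Rightarrow> 'v letter list" where
  "prd xs rs = concat (map (\<lambda>(x, r). x @ r @ inv_word x) (zip xs rs))"

lemma prd_Nil[simp]: "prd [] [] = []" by (simp add: prd_def)
lemma prd_Cons[simp]: "prd (x # xs) (r # rs) = x @ r @ inv_word x @ prd xs rs" by (simp add: prd_def)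
lemma prd_append: "length xs = length rs \<Longrightarrow> prd (xs @ ys) (rs @ ss) = prd xs rs @ prd ys ss"
  by (simp add: prd_def)

definition rep :: "'v set set \<Rightarrow> 'v letter list \<Rightarrow> nat \<Rightarrow> bool" where
  "rep K w c \<longleftrightarrow> (\<exists>xs rs. length xs = c \<and> length rs = c \<and>
      (\<forall>x\<in>set xs. snd ` set x \<subseteq> Edge K) \<and> set rs \<subseteq> relators_H_pm K \<and>
      freely_equal w (prd xs rs))"

lemma area_le: "rep K w c \<Longrightarrow> area_H K w \<le> c"
  unfolding area_H_def rep_def prd_def by (rule Least_le)

lemma rep_fe: assumes "rep K w c" "freely_equal w' w" shows "rep K w' c"
proof -
  obtain xs rs where H: "length xs = c" "length rs = c" "\<forall>x\<in>set xs. snd ` set x \<subseteq> Edge K"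
    "set rs \<subseteq> relators_H_pm K" "freely_equal w (prd xs rs)"
    using assms(1) unfolding rep_def by blast
  have "freely_equal w' (prd xs rs)" by (rule fe_trans[OF assms(2) H(5)])
  then show ?thesis unfolding rep_def using H by blast
qed

lemma rep_Nil: "rep K [] 0"
  unfolding rep_def by (auto intro!: exI[of _ "[]"] fe_refl)

lemma rep_rel: "r \<in> relators_H_pm K \<Longrightarrow> rep K r 1"
  unfolding rep_def
  by (rule exI[of _ "[[]]"], rule exI[of _ "[r]"]) (simp add: fe_refl)

lemma prd_conj: "length xs = length rs \<Longrightarrow>
   freely_equal (prd (map ((@) u) xs) rs) (u @ prd xs rs @ inv_word u)"
proof (induction xs rs rule: list_induct2)
  case Nil
  then show ?case using fe_sym[OF fe_inv_cancel[of u]] by simp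
next
  case (Cons x xs r rs)
  have A: "freely_equal ((u @ x @ r @ inv_word x @ inv_word u) @ prd (map ((@) u) xs) rs)
        ((u @ x @ r @ inv_word x @ inv_word u) @ (u @ prd xs rs @ inv_word u))"
    by (rule fe_append[OF fe_refl Cons.IH])
  have B: "freely_equal ((u @ x @ r @ inv_word x @ inv_word u) @ (u @ prd xs rs @ inv_word u))
       (u @ (x @ r @ inv_word x) @ prd xs rs @ inv_word u)"
    using fe_mid2[of "u @ x @ r @ inv_word x" u "prd xs rs @ inv_word u"] by simp
  show ?case using fe_trans[OF A B] by simp
qed

lemma rep_insert:
  assumes "rep K (u @ v) a" "rep K P b" "snd ` set u \<subseteq> Edge K"
  shows "rep K (u @ P @ v) (a + b)"
proof -
  obtain xs1 rs1 where 1: "length xs1 = a" "length rs1 = a" "\<forall>x\<in>set xs1. snd ` set x \<subseteq> Edge K"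
    "set rs1 \<subseteq> relators_H_pm K" "freely_equal (u @ v) (prd xs1 rs1)"
    using assms(1) unfolding rep_def by blast
  obtain xs2 rs2 where 2: "length xs2 = b" "length rs2 = b" "\<forall>x\<in>set xs2. snd ` set x \<subseteq> Edge K"
    "set rs2 \<subseteq> relators_H_pm K" "freely_equal P (prd xs2 rs2)"
    using assms(2) unfolding rep_def by blast
  have e1: "freely_equal (u @ P @ v) (u @ prd xs2 rs2 @ v)" by (rule fe_cong[OF 2(5)])
  have e2: "freely_equal (u @ prd xs2 rs2 @ v) ((u @ prd xs2 rs2 @ inv_word u) @ (u @ v))"
    using fe_sym[OF fe_mid2[of "u @ prd xs2 rs2" u v]] by simp
  have e3: "freely_equal ((u @ prd xs2 rs2 @ inv_word u) @ (u @ v)) (prd (map ((@) u) xs2) rs2 @ prd xs1 rs1)"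
    by (rule fe_append[OF fe_sym[OF prd_conj] 1(5)]) (simp add: 2)
  have fe4: "freely_equal (u @ P @ v) (prd (map ((@) u) xs2 @ xs1) (rs2 @ rs1))"
    using fe_trans[OF e1 fe_trans[OF e2 e3]] prd_append[of "map ((@) u) xs2" rs2 xs1 rs1] 2 by simp
  have S: "\<forall>x\<in>set (map ((@) u) xs2 @ xs1). snd ` set x \<subseteq> Edge K"
  proof
    fix x assume "x \<in> set (map ((@) u) xs2 @ xs1)"
    then consider "x \<in> set xs1" | y where "y \<in> set xs2" "x = u @ y" by auto
    then show "snd ` set x \<subseteq> Edge K"
    proof cases
      case 1 then show ?thesis using \<open>\<forall>x\<in>set xs1. snd ` set x \<subseteq> Edge K\<close> by blast
    next
      case 2
      then have "snd ` set x = snd ` set u \<union> snd ` set y" by (simp add: image_Un)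
      then show ?thesis using assms(3) 2 \<open>\<forall>x\<in>set xs2. snd ` set x \<subseteq> Edge K\<close> by auto
    qed
  qed
  show ?thesis unfolding rep_def
    apply (rule exI[of _ "map ((@) u) xs2 @ xs1"], rule exI[of _ "rs2 @ rs1"]) using fe4 1 2 S by auto
qed

lemma inv_prd: "length xs = length rs \<Longrightarrow>
   inv_word (prd xs rs) = prd (rev xs) (rev (map inv_word rs))"
  by (induction xs rs rule: list_induct2) (auto simp: prd_append)

lemma inv_rel: "r \<in> relators_H_pm K \<Longrightarrow> inv_word r \<in> relators_H_pm K"
  unfolding relators_H_pm_def by (auto simp: image_iff)

lemma rep_inv: "rep K w c \<Longrightarrow> rep K (inv_word w) c"
  unfolding rep_def
  apply (elim exE conjE)
  subgoal for xs rs
    apply (rule exI[of _ "rev xs"], rule exI[of _ "rev (map inv_word rs)"])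
    using inv_rel[of _ K] fe_inv[of w "prd xs rs"] by (auto simp: inv_prd)
  done

lemma rep_delete:
  assumes "rep K (u @ P @ v) a" "rep K P b" "snd ` set u \<subseteq> Edge K"
  shows "rep K (u @ v) (a + b)"
proof -
  have "rep K (u @ inv_word P @ (P @ v)) (a + b)"
    by (rule rep_insert[OF assms(1) rep_inv[OF assms(2)] assms(3)])
  then show ?thesis using rep_fe[OF _ fe_sym[OF fe_mid2[of u P v]]] by blast
qed

lemma rep_swap:
  assumes r1: "[b, c, a] \<in> relators_H_pm K" and r2: "[negl a, negl b, negl c] \<in> relators_H_pm K"
    and u: "snd ` set u \<subseteq> Edge K" and h: "rep K (u @ [c, b] @ v) c0"
  shows "rep K (u @ [b, c] @ v) (c0 + 2)"
proof -
  have X: "rep K ([b, c, a] @ [negl a, negl b, negl c]) 2"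
    unfolding rep_def
    apply (rule exI[of _ "[[], []]"], rule exI[of _ "[[b, c, a], [negl a, negl b, negl c]]"])
    using r1 r2 by (simp add: fe_refl)
  have F: "freely_equal [b, c, negl b, negl c] ([b, c, a] @ [negl a, negl b, negl c])"
    using fe_sym[OF fe_cancel[of "[b, c]" a "[negl b, negl c]"]] by simp
  have P: "rep K [b, c, negl b, negl c] 2" by (rule rep_fe[OF X F])
  have R: "rep K (u @ [b, c, negl b, negl c] @ ([c, b] @ v)) (c0 + 2)"
    by (rule rep_insert[OF h P u])
  have f1: "freely_equal (u @ [b,c,negl b] @ [negl c, c] @ [b] @ v) (u @ [b,c,negl b] @ [b] @ v)"
    using fe_cancel[of "u @ [b,c,negl b]" "negl c" "[b] @ v"] by simp
  have f2: "freely_equal (u @ [b,c,negl b] @ [b] @ v) (u @ [b,c] @ v)"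
    using fe_cancel[of "u @ [b,c]" "negl b" v] by simp
  have F2: "freely_equal (u @ [b, c, negl b, negl c] @ ([c, b] @ v)) (u @ [b, c] @ v)"
    using fe_trans[OF f1 f2] by simp
  show ?thesis by (rule rep_fe[OF R fe_sym[OF F2]])
qed

lemma rep_swapk:
  assumes r1: "[b, c, a] \<in> relators_H_pm K" and r2: "[negl a, negl b, negl c] \<in> relators_H_pm K"
    and cE: "snd c \<in> Edge K"
  shows "snd ` set u \<subseteq> Edge K \<Longrightarrow> rep K (u @ replicate k c @ [b] @ v) c0
     \<Longrightarrow> rep K (u @ [b] @ replicate k c @ v) (c0 + 2 * k)"
proof (induction k arbitrary: u c0)
  case 0 then show ?case by simp
next
  case (Suc k)
  have "rep K ((u @ [c]) @ replicate k c @ [b] @ v) c0" using Suc.prems(2) by simp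
  then have "rep K ((u @ [c]) @ [b] @ replicate k c @ v) (c0 + 2 * k)"
    using Suc.IH[of "u @ [c]"] Suc.prems(1) cE by auto
  then have "rep K (u @ [c, b] @ (replicate k c @ v)) (c0 + 2 * k)" by simp
  then have "rep K (u @ [b, c] @ (replicate k c @ v)) (c0 + 2 * k + 2)"
    by (rule rep_swap[OF r1 r2 Suc.prems(1)])
  then show ?case by simp
qed

lemma rep_edge_pow:
  assumes r: "[a, b] \<in> relators_H_pm K" and aE: "snd a \<in> Edge K"
  shows "rep K (replicate k a @ replicate k b) k"
proof (induction k)
  case 0 then show ?case by (simp add: rep_Nil)
next
  case (Suc k)
  have "rep K ([a] @ (replicate k a @ replicate k b) @ [b]) (1 + k)"
    by (rule rep_insert) (use rep_rel[OF r] Suc.IH aE in auto)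
  then show ?case by (simp add: replicate_app_Cons_same)
qed

lemma rep_tri_pow:
  assumes r0: "[a, b, c] \<in> relators_H_pm K" and r1: "[b, c, a] \<in> relators_H_pm K"
    and r2: "[negl a, negl b, negl c] \<in> relators_H_pm K"
    and aE: "snd a \<in> Edge K" and bE: "snd b \<in> Edge K" and cE: "snd c \<in> Edge K"
  shows "rep K (replicate k a @ replicate k b @ replicate k c) (k * k)"
proof (induction k)
  case 0 then show ?case by (simp add: rep_Nil)
next
  case (Suc k)
  have "rep K ([a] @ (replicate k a @ replicate k b @ replicate k c) @ [b, c]) (1 + k * k)"
    by (rule rep_insert) (use rep_rel[OF r0] Suc.IH aE in auto)
  then have H: "rep K ((a # replicate k a @ replicate k b) @ replicate k c @ [b] @ [c]) (1 + k * k)"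
    by simp
  have U: "snd ` set (a # replicate k a @ replicate k b) \<subseteq> Edge K" using aE bE by auto
  have "rep K ((a # replicate k a @ replicate k b) @ [b] @ replicate k c @ [c]) (1 + k * k + 2 * k)"
    using rep_swapk[OF r1 r2 cE U H] .
  then have H2: "rep K (replicate (Suc k) a @ replicate (Suc k) b @ replicate (Suc k) c) (1 + k * k + 2 * k)"
    by (simp add: replicate_app_Cons_same)
  have eq: "Suc k * Suc k = 1 + k * k + 2 * k" by simp
  show ?case by (subst eq) (rule H2)
qed

lemma Edge_rev: "e \<in> Edge K \<Longrightarrow> rev_edge e \<in> Edge K"
  by (auto simp: Edge_def rev_edge_def insert_commute)

lemma rev_rev_edge[simp]: "rev_edge (rev_edge e) = e" by (simp add: rev_edge_def)

lemma comb_cycle3: "comb_cycle K [e, f, g] \<longleftrightarrow>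
   (e \<in> Edge K \<and> f \<in> Edge K \<and> g \<in> Edge K \<and> snd e = fst f \<and> snd f = fst g \<and> snd g = fst e)"
proof
  assume H: "comb_cycle K [e, f, g]"
  then have A: "\<forall>i. Suc i < length [e,f,g] \<longrightarrow> snd ([e,f,g] ! i) = fst ([e,f,g] ! Suc i)"
    and B: "set [e,f,g] \<subseteq> Edge K" and C: "snd g = fst e"
    unfolding comb_cycle_def comb_path_def by auto
  show "e \<in> Edge K \<and> f \<in> Edge K \<and> g \<in> Edge K \<and> snd e = fst f \<and> snd f = fst g \<and> snd g = fst e"
    using A[rule_format, of 0] A[rule_format, of 1] B C by auto
next
  assume H: "e \<in> Edge K \<and> f \<in> Edge K \<and> g \<in> Edge K \<and> snd e = fst f \<and> snd f = fst g \<and> snd g = fst e"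
  have "\<forall>i. Suc i < length [e,f,g] \<longrightarrow> snd ([e,f,g] ! i) = fst ([e,f,g] ! Suc i)"
  proof (intro allI impI)
    fix i assume "Suc i < length [e,f,g]"
    then have "i = 0 \<or> i = 1" by auto
    then show "snd ([e,f,g] ! i) = fst ([e,f,g] ! Suc i)" using H by auto
  qed
  then show "comb_cycle K [e, f, g]" using H unfolding comb_cycle_def comb_path_def by auto
qed

lemma rel_tri: assumes "comb_cycle K [e, f, g]" shows "[(s, e), (s, f), (s, g)] \<in> relators_H_pm K"
proof -
  have "[(s, e), (s, f), (s, g)] \<in> relators_H K"
  proof (cases s)
    case True then show ?thesis unfolding relators_H_def using assms by blast
  next
    case False then show ?thesis unfolding relators_H_def using assms by blast
  qed
  then show ?thesis unfolding relators_H_pm_def by blast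
qed

lemma rel_edge: assumes e: "e \<in> Edge K" shows "[(s, e), (s, rev_edge e)] \<in> relators_H_pm K"
proof (cases s)
  case True
  have "[(True, e), (True, rev_edge e)] \<in> relators_H K" unfolding relators_H_def using e by blast
  then show ?thesis using True unfolding relators_H_pm_def by simp
next
  case False
  have "[(True, rev_edge e), (True, rev_edge (rev_edge e))] \<in> relators_H K"
    unfolding relators_H_def using Edge_rev[OF e] by blast
  then have "[(True, rev_edge e), (True, rev_edge (rev_edge e))] \<in> relators_H_pm K"
    unfolding relators_H_pm_def by blast
  from inv_rel[OF this] show ?thesis using False by (simp add: negl_def)
qed

lemma letter_pow_eq: "letter_pow e n = replicate (nat \<bar>n\<bar>) (0 \<le> n, e)"
  by (simp add: letter_pow_def)

lemma pow_word_append[simp]: "pow_word (xs @ ys) n = pow_word xs n @ pow_word ys n"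
  by (simp add: pow_word_def)

lemma pow_letters: "snd ` set (pow_word xs n) \<subseteq> set xs"
  by (auto simp: pow_word_def letter_pow_def split: if_splits)

lemma cell_cost:
  assumes "(\<exists>e\<in>Edge K. w = [e, rev_edge e]) \<or> (\<exists>e f g. w = [e, f, g] \<and> comb_cycle K [e, f, g])"
  shows "\<exists>c. c \<le> 3 * (nat \<bar>n\<bar> * nat \<bar>n\<bar>) \<and> rep K (pow_word w n) c"
proof -
  define k where "k = nat \<bar>n\<bar>"
  define s where "s = (0 \<le> n)"
  from assms show ?thesis
  proof
    assume "\<exists>e\<in>Edge K. w = [e, rev_edge e]"
    then obtain e where e: "e \<in> Edge K" "w = [e, rev_edge e]" by blast
    have "pow_word w n = replicate k (s, e) @ replicate k (s, rev_edge e)"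
      using e by (simp add: pow_word_def letter_pow_eq k_def s_def)
    moreover have "rep K (replicate k (s, e) @ replicate k (s, rev_edge e)) k"
      by (rule rep_edge_pow) (use rel_edge[OF e(1)] e in auto)
    moreover have "k \<le> 3 * (k * k)" by (cases k) auto
    ultimately show ?thesis unfolding k_def by metis
  next
    assume "\<exists>e f g. w = [e, f, g] \<and> comb_cycle K [e, f, g]"
    then obtain e f g where t: "w = [e, f, g]" "comb_cycle K [e, f, g]" by blast
    have t2: "comb_cycle K [f, g, e]" using t(2) by (simp add: comb_cycle3)
    have "pow_word w n = replicate k (s, e) @ replicate k (s, f) @ replicate k (s, g)"
      using t by (simp add: pow_word_def letter_pow_eq k_def s_def)
    moreover have "rep K (replicate k (s, e) @ replicate k (s, f) @ replicate k (s, g)) (k * k)"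
      by (rule rep_tri_pow) (use rel_tri[OF t(2)] rel_tri[OF t2] t(2) in \<open>auto simp: comb_cycle3 negl_def\<close>)
    moreover have "k * k \<le> 3 * (k * k)" by simp
    ultimately show ?thesis unfolding k_def by metis
  qed
qed

theorem lemma4p6:
  fixes K :: "('v::finite) set set"
    and es :: "('v \<times> 'v) list"
    and Cs :: "nat \<Rightarrow> ('v \<times> 'v) list"
    and m :: nat
    and n :: int
  assumes "abs_simplicial_complex K"
    and "finite_complex K"
    and "flag_complex K"
    and "simply_connected_complex K"
    and "comb_cycle K es"
    and "null_homotopy K es Cs m"
  shows "int (area_H K (pow_word es n)) \<le> 3 * int m * \<bar>n\<bar>^2"
proof -
  define k where "k = nat \<bar>n\<bar>"
  have NH: "Cs 0 = es" "Cs m = []" "\<And>i. i \<le> m \<Longrightarrow> comb_cycle K (Cs i)"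
    "\<And>i. i < m \<Longrightarrow> cell_expansion K (Cs i) (Cs (Suc i)) \<or> cell_expansion K (Cs (Suc i)) (Cs i)"
    using assms(6) unfolding null_homotopy_def by auto
  have key: "j \<le> m \<Longrightarrow> \<exists>c. c \<le> 3 * j * (k * k) \<and> rep K (pow_word (Cs (m - j)) n) c" for j
  proof (induction j)
    case 0 then show ?case using NH(2) rep_Nil by (auto simp: pow_word_def)
  next
    case (Suc j)
    define i where "i = m - Suc j"
    have iS: "Suc i = m - j" and im: "i < m" using Suc.prems by (auto simp: i_def)
    obtain c where c: "c \<le> 3 * j * (k * k)" "rep K (pow_word (Cs (Suc i)) n) c"
      using Suc.IH Suc.prems iS by auto
    have cyc: "comb_cycle K (Cs i)" "comb_cycle K (Cs (Suc i))" using NH(3) im by auto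
    have gen: "\<exists>c'. c' \<le> 3 * Suc j * (k * k) \<and> rep K (pow_word A n) c'"
      if A: "comb_cycle K A" and B: "comb_cycle K B" and rB: "rep K (pow_word B n) c"
       and ex: "cell_expansion K A B \<or> cell_expansion K B A" for A B
    proof -
      obtain xs ys w where xw: "(A = xs @ ys \<and> B = xs @ w @ ys) \<or> (B = xs @ ys \<and> A = xs @ w @ ys)"
        and wc: "(\<exists>e\<in>Edge K. w = [e, rev_edge e]) \<or> (\<exists>e f g. w = [e, f, g] \<and> comb_cycle K [e, f, g])"
        using ex unfolding cell_expansion_def by blast
      obtain cw where cw: "cw \<le> 3 * (k * k)" "rep K (pow_word w n) cw"
        using cell_cost[OF wc, of n] k_def by auto
      have xsE: "set xs \<subseteq> Edge K"
        using xw A B unfolding comb_cycle_def comb_path_def by auto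
      have uE: "snd ` set (pow_word xs n) \<subseteq> Edge K" using pow_letters xsE by blast
      from xw have "rep K (pow_word A n) (c + cw)"
      proof
        assume h: "A = xs @ ys \<and> B = xs @ w @ ys"
        show ?thesis using rep_delete[of K "pow_word xs n" "pow_word w n" "pow_word ys n" c cw] rB h cw uE
          by simp
      next
        assume h: "B = xs @ ys \<and> A = xs @ w @ ys"
        show ?thesis using rep_insert[of K "pow_word xs n" "pow_word ys n" c "pow_word w n" cw] rB h cw uE
          by simp
      qed
      moreover have "3 * Suc j * (k * k) = 3 * j * (k * k) + 3 * (k * k)" by (simp add: algebra_simps)
      then have "c + cw \<le> 3 * Suc j * (k * k)" using c(1) cw(1) by linarith
      ultimately show ?thesis by blast
    qed
    show ?case using gen[OF cyc(1) cyc(2) c(2) NH(4)[OF im]] by (simp add: i_def)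
  qed
  from key[of m] obtain c where c: "c \<le> 3 * m * (k * k)" "rep K (pow_word es n) c"
    using NH(1) by auto
  have "area_H K (pow_word es n) \<le> 3 * m * (k * k)" using area_le[OF c(2)] c(1) by simp
  then have "int (area_H K (pow_word es n)) \<le> int (3 * m * (k * k))" by linarith
  also have "int (3 * m * (k * k)) = 3 * int m * \<bar>n\<bar>^2"
    by (simp add: k_def power2_eq_square)
  finally show ?thesis .
qed

end
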